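(* Let $B\subseteq\mathbb{Z}_q^n$ satisfy $|B|\ge q^{n-b}$ for some $b\in\mathbb{N}$. Then for every $\mathbf{v}\in\mathbb{Z}_q^n$ and every integer $h$ with $b<h\le n$, $$\sum_{\mathbf{u}\in\mathbb{Z}_q^n:\ \|\mathbf{u}+\mathbf{v}\|_0=h}\frac{q^n}{|B|}\left|\widehat{\mathbf{1}_B}(\mathbf{u})\right|\le\left(\frac{2q^2e^2n}{h}\right)^{h/2}.$$
   Context: For $f:\mathbb{Z}_q^n\to\mathbb{C}$, $\widehat f(\mathbf{u})=q^{-n}\sum_{\mathbf{a}\in\mathbb{Z}_q^n}f(\mathbf{a})\omega^{-\mathbf{u}^\top\mathbf{a}}$ with $\omega=e^{2\pi i/q}$. $\mathbf{1}_B$ is the indicator function of $B$, and $\|\mathbf{u}\|_0$ is the number of nonzero coordinates of $\mathbf{u}$. *)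

theory Defs
  imports "HOL-Analysis.Analysis"
begin

text \<open>Z_q^n is modelled as extensional functions {..<n} -> {..<q}.\<close>
definition Zqn :: "nat \<Rightarrow> nat \<Rightarrow> (nat \<Rightarrow> nat) set" where
  "Zqn q n = PiE {..<n} (\<lambda>_. {..<q})"

definition vadd :: "nat \<Rightarrow> nat \<Rightarrow> (nat \<Rightarrow> nat) \<Rightarrow> (nat \<Rightarrow> nat) \<Rightarrow> (nat \<Rightarrow> nat)" where
  "vadd q n u v = (\<lambda>i\<in>{..<n}. (u i + v i) mod q)"

definition hw :: "nat \<Rightarrow> (nat \<Rightarrow> nat) \<Rightarrow> nat" where
  "hw n u = card {i\<in>{..<n}. u i \<noteq> 0}"

definition omega :: "nat \<Rightarrow> complex" where
  "omega q = exp (2 * pi * \<i> / of_nat q)"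

definition fourier :: "nat \<Rightarrow> nat \<Rightarrow> ((nat \<Rightarrow> nat) \<Rightarrow> complex) \<Rightarrow> (nat \<Rightarrow> nat) \<Rightarrow> complex" where
  "fourier q n f u = (1 / of_nat q ^ n) *
     (\<Sum>a\<in>Zqn q n. f a * inverse (omega q ^ ((\<Sum>i<n. u i * a i) mod q)))"

end

theory Submission
  imports Defs
begin

lemma modcancel: "(a + c) mod q = (b + c) mod (q::nat) \<Longrightarrow> a < q \<Longrightarrow> b < q \<Longrightarrow> a = b"
proof -
  have key: "x = y" if "(x + c) mod q = (y + c) mod q" "x < q" "y \<le> x" for x y
  proof -
    have "q dvd (x + c) - (y + c)" using that mod_eq_dvd_iff_nat[of "y+c" "x+c" q] by simp
    hence "q dvd x - y" by simp
    moreover have "x - y < q" using that by simp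
    ultimately have "x - y = 0" by (metis dvd_imp_le le_less_trans less_irrefl neq0_conv)
    with that show ?thesis by simp
  qed
  assume a: "(a + c) mod q = (b + c) mod (q::nat)" "a < q" "b < q"
  show ?thesis
  proof (cases "b \<le> a")
    case True thus ?thesis using key a by blast
  next
    case False thus ?thesis using key[of b a] a by simp
  qed
qed


lemma fact_bound: "real h ^ h / fact h \<le> exp (real h)"
proof -
  have "(\<lambda>k. real h ^ k /\<^sub>R fact k) sums exp (real h)" by (rule exp_converges)
  hence s: "summable (\<lambda>k. real h ^ k / fact k)" and e: "exp (real h) = (\<Sum>k. real h ^ k / fact k)"
    by (auto simp: sums_iff divide_inverse_commute)
  have "sum (\<lambda>k. real h ^ k / fact k) {h} \<le> (\<Sum>k. real h ^ k / fact k)"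
    by (rule sum_le_suminf[OF s]) auto
  thus ?thesis using e by simp
qed

lemma binom_bound:
  assumes "h > 0"
  shows "real (n choose h) \<le> (exp 1 * real n / real h) ^ h"
proof -
  have "real (n choose h) * fact h \<le> real n ^ h"
    using binomial_fact_pow[of n h] by (metis of_nat_fact of_nat_le_iff of_nat_mult of_nat_power)
  hence "real (n choose h) \<le> real n ^ h / fact h" by (simp add: field_simps)
  also have "\<dots> = (real n / real h) ^ h * (real h ^ h / fact h)"
    using assms by (simp add: power_divide)
  also have "\<dots> \<le> (real n / real h) ^ h * exp (real h)"
    by (intro mult_left_mono fact_bound) auto
  also have "exp (real h) = exp 1 ^ h" using exp_of_nat_mult[of h 1] by simp
  also have "(real n / real h) ^ h * exp 1 ^ h = (exp 1 * real n / real h) ^ h"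
    by (simp add: power_mult_distrib[symmetric] mult.commute)
  finally show ?thesis .
qed



lemma count_hw:
  "card {w\<in>Zqn q n. hw n w = h} \<le> (n choose h) * q ^ h"
proof -
  define S where "S w = {i\<in>{..<n}. w i \<noteq> (0::nat)}" for w :: "nat \<Rightarrow> nat"
  define T where "T = Sigma {I. I \<subseteq> {..<n} \<and> card I = h} (\<lambda>I. PiE I (\<lambda>_. {..<q}))"
  have fin: "finite T" unfolding T_def
    by (intro finite_SigmaI finite_PiE) (auto intro: finite_subset[of _ "{..<n}"])
  have inj: "inj_on (\<lambda>w. (S w, restrict w (S w))) {w\<in>Zqn q n. hw n w = h}"
  proof (rule inj_onI)
    fix w1 w2 assume w1: "w1 \<in> {w\<in>Zqn q n. hw n w = h}" and w2: "w2 \<in> {w\<in>Zqn q n. hw n w = h}"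
      and eq: "(S w1, restrict w1 (S w1)) = (S w2, restrict w2 (S w2))"
    show "w1 = w2"
    proof
      fix i
      show "w1 i = w2 i"
      proof (cases "i < n")
        case True
        show ?thesis
        proof (cases "i \<in> S w1")
          case True
          then show ?thesis using eq by (metis prod.inject restrict_apply')
        next
          case False
          then have "i \<notin> S w2" using eq by auto
          with False \<open>i<n\<close> show ?thesis by (auto simp: S_def)
        qed
      next
        case False
        then show ?thesis using w1 w2 by (auto simp: Zqn_def PiE_def extensional_def)
      qed
    qed
  qed
  have sub: "(\<lambda>w. (S w, restrict w (S w))) ` {w\<in>Zqn q n. hw n w = h} \<subseteq> T"
  proof
    fix x assume "x \<in> (\<lambda>w. (S w, restrict w (S w))) ` {w\<in>Zqn q n. hw n w = h}"
    then obtain w where w: "w \<in> Zqn q n" "hw n w = h" and x: "x = (S w, restrict w (S w))" by auto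
    have "restrict w (S w) \<in> PiE (S w) (\<lambda>_. {..<q})"
      using w(1) by (auto simp: restrict_PiE_iff Zqn_def PiE_iff S_def)
    moreover have "S w \<subseteq> {..<n}" "card (S w) = h" using w(2) by (auto simp: S_def hw_def)
    ultimately show "x \<in> T" unfolding T_def x by auto
  qed
  have "card {w\<in>Zqn q n. hw n w = h} \<le> card T"
    using card_inj_on_le[OF inj sub fin] .
  also have "card T = (\<Sum>I\<in>{I. I \<subseteq> {..<n} \<and> card I = h}. card (PiE I (\<lambda>_. {..<q})))"
    unfolding T_def by (rule card_SigmaI) (auto intro!: finite_PiE intro: finite_subset[of _ "{..<n}"])
  also have "\<dots> = (\<Sum>I\<in>{I. I \<subseteq> {..<n} \<and> card I = h}. q ^ h)"
    by (intro sum.cong refl) (auto simp: card_PiE finite_subset)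
  also have "\<dots> = (n choose h) * q ^ h" using n_subsets[of "{..<n}" h] by simp
  finally show ?thesis .
qed

lemma vadd_inj:
  assumes "q > 0"
  shows "inj_on (\<lambda>u. vadd q n u v) (Zqn q n)"
proof (rule inj_onI)
  fix x y assume x: "x \<in> Zqn q n" and y: "y \<in> Zqn q n" and e: "vadd q n x v = vadd q n y v"
  show "x = y"
  proof
    fix i show "x i = y i"
    proof (cases "i < n")
      case True
      have "(x i + v i) mod q = (y i + v i) mod q" using fun_cong[OF e, of i] True by (simp add: vadd_def)
      moreover have "x i < q" "y i < q" using x y True by (auto simp: Zqn_def PiE_iff)
      ultimately show ?thesis by (rule modcancel)
    next
      case False then show ?thesis using x y by (auto simp: Zqn_def PiE_def extensional_def)
    qed
  qed
qed

lemma count_S: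
  assumes "q > 0"
  shows "card {u\<in>Zqn q n. hw n (vadd q n u v) = h} \<le> (n choose h) * q ^ h"
proof -
  have "card {u\<in>Zqn q n. hw n (vadd q n u v) = h} \<le> card {w\<in>Zqn q n. hw n w = h}"
  proof (rule card_inj_on_le)
    show "inj_on (\<lambda>u. vadd q n u v) {u\<in>Zqn q n. hw n (vadd q n u v) = h}"
      using vadd_inj[OF assms] by (rule inj_on_subset) auto
    show "(\<lambda>u. vadd q n u v) ` {u\<in>Zqn q n. hw n (vadd q n u v) = h} \<subseteq> {w\<in>Zqn q n. hw n w = h}"
      using assms by (auto simp: vadd_def Zqn_def PiE_iff)
    show "finite {w\<in>Zqn q n. hw n w = h}"
      by (rule finite_subset[of _ "Zqn q n"]) (auto simp: Zqn_def intro: finite_PiE)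
  qed
  with count_hw[of q n h] show ?thesis by linarith
qed


definition ch :: "nat \<Rightarrow> int \<Rightarrow> complex" where
  "ch q x = exp (2 * pi * \<i> * of_int x / of_nat q)"

lemma ch_add: "ch q (x + y) = ch q x * ch q y"
  unfolding ch_def by (simp add: exp_add[symmetric] distrib_left add_divide_distrib)

lemma ch_zero[simp]: "ch q 0 = 1" by (simp add: ch_def)

lemma ch_minus: "ch q (- x) = inverse (ch q x)"
  unfolding ch_def by (simp add: exp_minus[symmetric])

lemma ch_cnj: "cnj (ch q x) = ch q (- x)"
  unfolding ch_def by (simp add: exp_cnj)

lemma ch_nat_mult: "ch q (int k * d) = ch q d ^ k"
  unfolding ch_def using exp_of_nat_mult[of k "2 * pi * \<i> * of_int d / of_nat q"]
  by (simp add: algebra_simps)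

lemma ch_period: assumes "q > 0" shows "ch q (int q * m) = 1"
proof -
  have "ch q (int q * m) = exp ((2 * (of_int m :: complex) * pi) * \<i>)"
    unfolding ch_def using assms by (simp add: field_simps)
  also have "\<dots> = 1" unfolding exp_eq_1 by (intro conjI exI[of _ m]) simp_all
  finally show ?thesis .
qed

lemma ch_mod: assumes "q > 0" shows "ch q (x mod int q) = ch q x"
proof -
  have "ch q x = ch q (x mod int q) * ch q (int q * (x div int q))" by (metis ch_add mod_mult_div_eq)
  thus ?thesis by (simp add: ch_period[OF assms])
qed

lemma omega_pow: "omega q ^ k = ch q (int k)"
  unfolding omega_def ch_def using exp_of_nat_mult[of k "2 * pi * \<i> / of_nat q"]
  by (simp add: algebra_simps)

lemma ch_sum: "finite A \<Longrightarrow> ch q (\<Sum>i\<in>A. f i) = (\<Prod>i\<in>A. ch q (f i))"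
  by (induction A rule: finite_induct) (auto simp: ch_add)

lemma ch_eq_1:
  assumes "q > 0" "\<bar>d\<bar> < int q" "ch q d = 1" shows "d = 0"
proof -
  have "exp (2 * pi * \<i> * of_int d / of_nat q) = 1" using assms(3) by (simp add: ch_def)
  then obtain m :: int where m: "Im (2 * pi * \<i> * of_int d / of_nat q) = of_int (2 * m) * pi"
    unfolding exp_eq_1 by blast
  hence "2 * pi * real_of_int d / real q = 2 * real_of_int m * pi" by simp
  hence "real_of_int d = real q * real_of_int m" using assms(1) by (simp add: field_simps)
  hence dm: "d = int q * m" by (metis of_int_eq_iff of_int_mult of_int_of_nat_eq)
  show ?thesis
  proof (rule ccontr)
    assume "d \<noteq> 0" hence "m \<noteq> 0" using dm by simp
    hence m1: "\<bar>m\<bar> \<ge> 1" by simp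
    have "\<bar>d\<bar> = int q * \<bar>m\<bar>" using dm by (simp add: abs_mult)
    also have "\<dots> \<ge> int q * 1" by (rule mult_left_mono[OF m1]) simp
    finally have "\<bar>d\<bar> \<ge> int q" by simp
    with assms(2) show False by simp
  qed
qed

lemma geo:
  assumes "q > 0" "a < q" "b < q"
  shows "(\<Sum>k<q. ch q (int k * (int b - int a))) = (if a = b then of_nat q else 0)"
proof -
  let ?z = "ch q (int b - int a)"
  have "(\<Sum>k<q. ch q (int k * (int b - int a))) = (\<Sum>k<q. ?z ^ k)" by (simp add: ch_nat_mult)
  also have "\<dots> = (if ?z = 1 then of_nat q else (1 - ?z ^ q) / (1 - ?z))" by (rule sum_gp_strict)
  also have "?z ^ q = 1" using ch_nat_mult[of q q "int b - int a"] ch_period[OF assms(1)] by simp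
  also have "(?z = 1) \<longleftrightarrow> a = b"
  proof
    assume "?z = 1" hence "int b - int a = 0" using ch_eq_1[OF assms(1), of "int b - int a"] assms by auto
    thus "a = b" by simp
  qed simp
  finally show ?thesis by simp
qed



lemma Zqn_fin: "finite (Zqn q n)" by (auto simp: Zqn_def intro: finite_PiE)

lemma fourier_eq:
  assumes "q > 0" "B \<subseteq> Zqn q n"
  shows "fourier q n (indicator B) u =
     (1 / of_nat q ^ n) * (\<Sum>a\<in>B. ch q (- (\<Sum>i<n. int (u i * a i))))"
proof -
  have inv: "inverse (omega q ^ (m mod q)) = ch q (- int m)" for m
  proof -
    have "inverse (omega q ^ (m mod q)) = inverse (ch q (int m mod int q))"
      by (simp add: omega_pow zmod_int)
    also have "\<dots> = ch q (- int m)" by (simp add: ch_mod[OF assms(1)] ch_minus)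
    finally show ?thesis .
  qed
  have "(\<Sum>a\<in>Zqn q n. indicator B a * inverse (omega q ^ ((\<Sum>i<n. u i * a i) mod q)))
      = (\<Sum>a\<in>Zqn q n. if a \<in> B then ch q (- (\<Sum>i<n. int (u i * a i))) else 0)"
    by (intro sum.cong refl) (simp add: inv indicator_def of_nat_sum)
  also have "\<dots> = (\<Sum>a\<in>Zqn q n \<inter> B. ch q (- (\<Sum>i<n. int (u i * a i))))"
    by (rule sum.inter_restrict[symmetric]) (rule Zqn_fin)
  also have "Zqn q n \<inter> B = B" using assms(2) by blast
  finally show ?thesis unfolding fourier_def by simp
qed

lemma prod_if_eq:
  "(\<Prod>i<n. if P i then (c::complex) else 0) = (if (\<forall>i<n. P i) then c ^ n else 0)"
proof (cases "\<forall>i<n. P i")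
  case True thus ?thesis by simp
next
  case False
  then obtain j where "j < n" "\<not> P j" by auto
  thus ?thesis using False by (intro trans[OF prod_zero]) auto
qed

lemma inner_sum:
  assumes "q > 0" "a \<in> Zqn q n" "b \<in> Zqn q n"
  shows "(\<Sum>u\<in>Zqn q n. \<Prod>i<n. ch q (int (u i) * (int (b i) - int (a i))))
         = (if a = b then of_nat q ^ n else 0)"
proof -
  have "(\<Sum>u\<in>Zqn q n. \<Prod>i<n. ch q (int (u i) * (int (b i) - int (a i))))
      = (\<Prod>i<n. \<Sum>k<q. ch q (int k * (int (b i) - int (a i))))"
    unfolding Zqn_def by (rule prod_sum_PiE[symmetric]) auto
  also have "\<dots> = (\<Prod>i<n. if a i = b i then of_nat q else 0)"
    by (intro prod.cong refl geo[OF assms(1)]) (use assms in \<open>auto simp: Zqn_def PiE_iff\<close>)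
  also have "\<dots> = (if (\<forall>i<n. a i = b i) then of_nat q ^ n else 0)" by (rule prod_if_eq)
  also have "(\<forall>i<n. a i = b i) \<longleftrightarrow> a = b"
  proof
    assume h: "\<forall>i<n. a i = b i"
    show "a = b"
    proof
      fix i show "a i = b i"
        using h assms(2,3) by (cases "i < n") (auto simp: Zqn_def PiE_def extensional_def)
    qed
  qed simp
  finally show ?thesis .
qed

lemma parseval:
  assumes "q > 0" "B \<subseteq> Zqn q n"
  shows "(\<Sum>u\<in>Zqn q n. cmod (fourier q n (indicator B) u) ^ 2) = real (card B) / real q ^ n"
proof -
  define e where "e u a = (\<Sum>i<n. int (u i * a i))" for u a :: "nat \<Rightarrow> nat"
  define G where "G u = (\<Sum>a\<in>B. ch q (- e u a))" for u
  have finB: "finite B" using assms(2) Zqn_fin finite_subset by blast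
  have F: "fourier q n (indicator B) u = (1 / of_nat q ^ n) * G u" for u
    unfolding G_def e_def by (rule fourier_eq[OF assms])
  have diff: "e u b - e u a = (\<Sum>i<n. int (u i) * (int (b i) - int (a i)))" for u a b
    unfolding e_def by (simp add: sum_subtractf[symmetric] algebra_simps)
  have GG: "complex_of_real (cmod (G u) ^ 2) = (\<Sum>a\<in>B. \<Sum>b\<in>B. \<Prod>i<n. ch q (int (u i) * (int (b i) - int (a i))))" for u
  proof -
    have "complex_of_real (cmod (G u) ^ 2) = G u * cnj (G u)" by (rule complex_norm_square)
    also have "\<dots> = (\<Sum>a\<in>B. \<Sum>b\<in>B. ch q (- e u a) * ch q (e u b))"
      unfolding G_def by (simp add: sum_distrib_left sum_distrib_right ch_cnj) (rule sum.swap)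
    also have "\<dots> = (\<Sum>a\<in>B. \<Sum>b\<in>B. ch q (e u b - e u a))"
      by (simp add: ch_add[symmetric] mult.commute)
    also have "\<dots> = (\<Sum>a\<in>B. \<Sum>b\<in>B. \<Prod>i<n. ch q (int (u i) * (int (b i) - int (a i))))"
      by (simp add: diff ch_sum)
    finally show ?thesis .
  qed
  have "complex_of_real (\<Sum>u\<in>Zqn q n. cmod (G u) ^ 2)
      = (\<Sum>u\<in>Zqn q n. \<Sum>a\<in>B. \<Sum>b\<in>B. \<Prod>i<n. ch q (int (u i) * (int (b i) - int (a i))))"
    unfolding of_real_sum by (intro sum.cong refl GG)
  also have "\<dots> = (\<Sum>a\<in>B. \<Sum>b\<in>B. \<Sum>u\<in>Zqn q n. \<Prod>i<n. ch q (int (u i) * (int (b i) - int (a i))))"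
    by (subst sum.swap) (intro sum.cong refl sum.swap)
  also have "\<dots> = (\<Sum>a\<in>B. \<Sum>b\<in>B. if a = b then of_nat q ^ n else 0)"
    using assms(2) by (intro sum.cong refl inner_sum[OF assms(1)]) auto
  also have "\<dots> = of_nat (card B) * of_nat q ^ n" using finB by simp
  finally have S0: "complex_of_real (\<Sum>u\<in>Zqn q n. cmod (G u) ^ 2) = complex_of_real (real (card B) * real q ^ n)"
    by simp
  hence S: "(\<Sum>u\<in>Zqn q n. cmod (G u) ^ 2) = real (card B) * real q ^ n"
    by (simp only: of_real_eq_iff)
  have "(\<Sum>u\<in>Zqn q n. cmod (fourier q n (indicator B) u) ^ 2)
      = (\<Sum>u\<in>Zqn q n. (1 / real q ^ n) ^ 2 * cmod (G u) ^ 2)"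
    by (simp add: F norm_mult norm_divide norm_power power_divide)
  also have "\<dots> = (1 / real q ^ n) ^ 2 * (real (card B) * real q ^ n)"
    by (simp add: sum_distrib_left[symmetric] S)
  also have "\<dots> = real (card B) / real q ^ n" using assms(1) by (simp add: power2_eq_square field_simps)
  finally show ?thesis .
qed



theorem lemma6p6:
  fixes q n b h :: nat and B :: "(nat \<Rightarrow> nat) set" and v :: "nat \<Rightarrow> nat"
  assumes "B \<subseteq> Zqn q n"
    and "real (card B) \<ge> real q ^ (n - b)"
    and "v \<in> Zqn q n"
    and "b < h" and "h \<le> n"
  shows "(\<Sum>u\<in>{u\<in>Zqn q n. hw n (vadd q n u v) = h}.
            real q ^ n / real (card B) * cmod (fourier q n (indicator B) u))
         \<le> (2 * real q ^ 2 * exp 1 ^ 2 * real n / real h) powr (real h / 2)"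
proof -
  define S where "S = {u\<in>Zqn q n. hw n (vadd q n u v) = h}"
  define g where "g u = cmod (fourier q n (indicator B) u)" for u
  define X where "X = 2 * real q ^ 2 * exp 1 ^ 2 * real n / real h"
  define L where "L = (\<Sum>u\<in>S. real q ^ n / real (card B) * g u)"
  have hpos: "h > 0" "n > 0" using assms by auto
  have R0: "0 \<le> X powr (real h / 2)" by simp
  show ?thesis
  proof (cases "q = 0 \<or> card B = 0")
    case True
    have "L = 0"
    proof (cases "q = 0")
      case True
      have "Zqn q n = {}" using True hpos by (auto simp: Zqn_def PiE_eq_empty_iff)
      thus ?thesis by (simp add: L_def S_def)
    next
      case False
      thus ?thesis using True by (simp add: L_def)
    qed
    thus ?thesis using R0 unfolding L_def S_def g_def X_def by simp
  next
    case False
    hence q: "q > 0" and cB: "card B > 0" by auto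
    have finZ: "finite (Zqn q n)" by (rule Zqn_fin)
    have SZ: "S \<subseteq> Zqn q n" by (auto simp: S_def)
    have finS: "finite S" using finite_subset[OF SZ finZ] .
    have cs: "(\<Sum>u\<in>S. g u)^2 \<le> (\<Sum>u\<in>S. (g u)^2) * card S"
      by (rule sum_squared_le_sum_of_squares)
    also have "\<dots> \<le> (\<Sum>u\<in>Zqn q n. (g u)^2) * card S"
      by (intro mult_right_mono sum_mono2[OF finZ SZ]) auto
    also have "(\<Sum>u\<in>Zqn q n. (g u)^2) = real (card B) / real q ^ n"
      unfolding g_def by (rule parseval[OF q assms(1)])
    finally have cs2: "(\<Sum>u\<in>S. g u)^2 \<le> real (card B) / real q ^ n * card S" .
    have L: "L = real q ^ n / real (card B) * (\<Sum>u\<in>S. g u)"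
      unfolding L_def by (simp add: sum_distrib_left)
    have "L^2 = (real q ^ n / real (card B))^2 * (\<Sum>u\<in>S. g u)^2"
      unfolding L by (rule power_mult_distrib)
    also have "\<dots> \<le> (real q ^ n / real (card B))^2 * (real (card B) / real q ^ n * card S)"
      by (intro mult_left_mono cs2) simp
    also have "\<dots> = real q ^ n / real (card B) * card S"
      using q cB by (simp add: power2_eq_square field_simps)
    also have "\<dots> \<le> real q ^ b * ((exp 1 * real n / real h) ^ h * real q ^ h)"
    proof (rule mult_mono)
      have "real q ^ n = real q ^ (n - b) * real q ^ b"
        using assms by (simp add: power_add[symmetric])
      thus "real q ^ n / real (card B) \<le> real q ^ b"
        using assms(2) cB q by (simp add: divide_le_eq mult_right_mono)
      have "real (card S) \<le> real ((n choose h) * q ^ h)"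
        unfolding S_def using count_S[OF q] by (simp only: of_nat_le_iff)
      also have "\<dots> = real (n choose h) * real q ^ h" by simp
      also have "\<dots> \<le> (exp 1 * real n / real h) ^ h * real q ^ h"
        by (intro mult_right_mono binom_bound hpos) simp
      finally show "real (card S) \<le> (exp 1 * real n / real h) ^ h * real q ^ h" .
    qed simp_all
    also have "\<dots> \<le> real q ^ h * ((exp 1 * real n / real h) ^ h * real q ^ h)"
      using q assms(4) by (intro mult_right_mono power_increasing) auto
    also have "\<dots> = (exp 1 * real n * real q ^ 2 / real h) ^ h"
      by (simp add: power_mult_distrib power_divide power_mult[symmetric] mult.commute power_add[symmetric] mult_2_right)
    also have "\<dots> \<le> X ^ h"
      unfolding X_def
    proof (intro power_mono)
      have "exp 1 * real n * real q ^ 2 \<le> 2 * real q ^ 2 * exp 1 ^ 2 * real n"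
      proof -
        have e1: "(1::real) \<le> exp 1" by simp
        have "exp (1::real) * 1 \<le> exp 1 * exp 1" using e1 by (intro mult_left_mono) auto
        hence ee: "exp (1::real) \<le> 2 * exp 1 ^ 2" unfolding power2_eq_square using e1 by linarith
        have "exp 1 * (real n * real q ^ 2) \<le> (2 * exp 1 ^ 2) * (real n * real q ^ 2)"
          using ee by (intro mult_right_mono) auto
        thus ?thesis by (simp add: algebra_simps)
      qed
      thus "exp 1 * real n * real q ^ 2 / real h \<le> 2 * real q ^ 2 * exp 1 ^ 2 * real n / real h"
        by (intro divide_right_mono) auto
    qed simp
    also have "X ^ h = (X powr (real h / 2))^2"
    proof -
      have Xp: "X > 0" unfolding X_def using q hpos by simp
      have "(X powr (real h / 2))^2 = X powr (real h / 2 + real h / 2)"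
        unfolding power2_eq_square by (rule powr_add[symmetric])
      also have "\<dots> = X powr real h" by simp
      also have "\<dots> = X ^ h" using Xp by (simp add: powr_realpow)
      finally show ?thesis by simp
    qed
    finally have "L^2 \<le> (X powr (real h / 2))^2" .
    hence "L \<le> X powr (real h / 2)" using R0 by (rule power2_le_imp_le)
    thus ?thesis unfolding L_def S_def g_def X_def .
  qed
qed

end
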